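(* Let $G$ be a fullerene graph and $S$ a perfect star packing of $G$. If a pentagonal face $P$ of $G$ has a vertex $x\in C(S)$, then $G-C(S)$ contains a cycle $C$ which is not the boundary of a face of $G$ such that the path $P-x$ is a subgraph of $C$.
   Context: A fullerene graph is a finite simple connected (equivalently, $3$-connected) plane cubic graph all of whose faces are pentagons or hexagons. A perfect star packing of $G$ is a spanning subgraph $S$ of $G$ every connected component of which is isomorphic to $K_{1,3}$; $C(S)$ denotes the set of centers (degree-$3$ vertices) of the stars in $S$. A cycle of $G$ is facial if it bounds a face of $G$, and non-facial otherwise. *)

theory Defs
  imports Main
begin

definition simple_graph :: "'v set \<Rightarrow> 'v set set \<Rightarrow> bool" where
  "simple_graph V E \<longleftrightarrow> finite V \<and>
     (\<forall>e\<in>E. \<exists>a b. a \<noteq> b \<and> a \<in> V \<and> b \<in> V \<and> e = {a, b})"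

definition nbrs :: "'v set set \<Rightarrow> 'v \<Rightarrow> 'v set" where
  "nbrs E v = {w. w \<noteq> v \<and> {v, w} \<in> E}"

definition adj_rel :: "'v set set \<Rightarrow> ('v \<times> 'v) set" where
  "adj_rel E = {(a, b). a \<noteq> b \<and> {a, b} \<in> E}"

definition connected_graph :: "'v set \<Rightarrow> 'v set set \<Rightarrow> bool" where
  "connected_graph V E \<longleftrightarrow> V \<noteq> {} \<and> (\<forall>a\<in>V. \<forall>b\<in>V. (a, b) \<in> (adj_rel E)\<^sup>*)"

definition cubic :: "'v set \<Rightarrow> 'v set set \<Rightarrow> bool" where
  "cubic V E \<longleftrightarrow> (\<forall>v\<in>V. card (nbrs E v) = 3)"

definition darts :: "'v set \<Rightarrow> 'v set set \<Rightarrow> ('v \<times> 'v) set" where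
  "darts V E = {(a, b). a \<in> V \<and> b \<in> V \<and> a \<noteq> b \<and> {a, b} \<in> E}"

(* Rotation system (combinatorial embedding): for each vertex v, rot v is a cyclic
   permutation of the neighbours of v (the cyclic order of edges around v). *)
definition rotation_system :: "'v set \<Rightarrow> 'v set set \<Rightarrow> ('v \<Rightarrow> 'v \<Rightarrow> 'v) \<Rightarrow> bool" where
  "rotation_system V E rot \<longleftrightarrow>
     (\<forall>v\<in>V. bij_betw (rot v) (nbrs E v) (nbrs E v) \<and>
        (\<forall>w\<in>nbrs E v. nbrs E v = {(rot v ^^ k) w | k. True}))"

definition face_step :: "('v \<Rightarrow> 'v \<Rightarrow> 'v) \<Rightarrow> 'v \<times> 'v \<Rightarrow> 'v \<times> 'v" where
  "face_step rot d = (snd d, rot (snd d) (fst d))"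

definition face_orbit :: "('v \<Rightarrow> 'v \<Rightarrow> 'v) \<Rightarrow> 'v \<times> 'v \<Rightarrow> ('v \<times> 'v) set" where
  "face_orbit rot d = {(face_step rot ^^ k) d | k. True}"

(* Faces = orbits of the face permutation; the length of a face is the size of its orbit. *)
definition faces :: "'v set \<Rightarrow> 'v set set \<Rightarrow> ('v \<Rightarrow> 'v \<Rightarrow> 'v) \<Rightarrow> ('v \<times> 'v) set set" where
  "faces V E rot = face_orbit rot ` darts V E"

definition face_verts :: "('v \<times> 'v) set \<Rightarrow> 'v set" where
  "face_verts F = fst ` F"

definition face_edges :: "('v \<times> 'v) set \<Rightarrow> 'v set set" where
  "face_edges F = (\<lambda>(a, b). {a, b}) ` F"

(* A connected simple graph with a rotation system of genus 0 (Euler: V - E + F = 2),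
   i.e. a plane graph given combinatorially. *)
definition plane_graph :: "'v set \<Rightarrow> 'v set set \<Rightarrow> ('v \<Rightarrow> 'v \<Rightarrow> 'v) \<Rightarrow> bool" where
  "plane_graph V E rot \<longleftrightarrow> simple_graph V E \<and> connected_graph V E \<and> rotation_system V E rot \<and>
     int (card V) - int (card E) + int (card (faces V E rot)) = 2"

definition fullerene :: "'v set \<Rightarrow> 'v set set \<Rightarrow> ('v \<Rightarrow> 'v \<Rightarrow> 'v) \<Rightarrow> bool" where
  "fullerene V E rot \<longleftrightarrow> plane_graph V E rot \<and> cubic V E \<and>
     (\<forall>F\<in>faces V E rot. card F = 5 \<or> card F = 6)"

definition component :: "'v set \<Rightarrow> 'v set set \<Rightarrow> 'v \<Rightarrow> 'v set" where
  "component V S v = {w\<in>V. (v, w) \<in> (adj_rel S)\<^sup>*}"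

definition is_K13 :: "'v set \<Rightarrow> 'v set set \<Rightarrow> bool" where
  "is_K13 W S \<longleftrightarrow> card W = 4 \<and>
     (\<exists>c\<in>W. {e\<in>S. e \<subseteq> W} = {{c, w} | w. w \<in> W - {c}})"

definition perfect_star_packing :: "'v set \<Rightarrow> 'v set set \<Rightarrow> 'v set set \<Rightarrow> bool" where
  "perfect_star_packing V E S \<longleftrightarrow> S \<subseteq> E \<and> (\<forall>v\<in>V. is_K13 (component V S v) S)"

definition centers :: "'v set \<Rightarrow> 'v set set \<Rightarrow> 'v set" where
  "centers V S = {v\<in>V. card (nbrs S v) = 3}"

definition is_cycle :: "'v set set \<Rightarrow> 'v list \<Rightarrow> bool" where
  "is_cycle E vs \<longleftrightarrow> length vs \<ge> 3 \<and> distinct vs \<and>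
     (\<forall>i<length vs. {vs ! i, vs ! ((i + 1) mod length vs)} \<in> E)"

definition cycle_edges :: "'v list \<Rightarrow> 'v set set" where
  "cycle_edges vs = {{vs ! i, vs ! ((i + 1) mod length vs)} | i. i < length vs}"

definition facial_cycle :: "'v set \<Rightarrow> 'v set set \<Rightarrow> ('v \<Rightarrow> 'v \<Rightarrow> 'v) \<Rightarrow> 'v list \<Rightarrow> bool" where
  "facial_cycle V E rot vs \<longleftrightarrow> (\<exists>F\<in>faces V E rot. cycle_edges vs = face_edges F)"

end

theory Submission
  imports Defs
begin

lemma edge_in_V:
  assumes "simple_graph V E" "{u, v} \<in> E"
  shows "u \<in> V" "v \<in> V" "u \<noteq> v"
  using assms unfolding simple_graph_def by (auto simp: doubleton_eq_iff)

lemma nbrs_finite: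
  assumes "cubic V E" "v \<in> V" shows "finite (nbrs E v)" "card (nbrs E v) = 3"
  using assms unfolding cubic_def by (auto intro: card_ge_0_finite)

lemma star_center:
  assumes sg: "simple_graph V E" and cu: "cubic V E"
    and ps: "perfect_star_packing V E S" and vV: "v \<in> V"
  shows "\<exists>c\<in>V. c \<in> centers V S \<and> (v = c \<or> {c, v} \<in> S) \<and>
           (\<forall>c'\<in>centers V S. {c', v} \<in> E \<or> c' = v \<longrightarrow> c' = c)"
proof -
  define W where "W = component V S v"
  have SE: "S \<subseteq> E" using ps unfolding perfect_star_packing_def by auto
  have K: "is_K13 W S" using ps vV unfolding perfect_star_packing_def W_def by auto
  then obtain c where cW: "c \<in> W" and cardW: "card W = 4"
    and st: "{e\<in>S. e \<subseteq> W} = {{c, w} | w. w \<in> W - {c}}"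
    unfolding is_K13_def by auto
  have WV: "W \<subseteq> V" unfolding W_def component_def by auto
  have vW: "v \<in> W" using vV unfolding W_def component_def by auto
  have clos: "z \<in> W" if "y \<in> W" "{y, z} \<in> S" for y z
  proof -
    have "{y, z} \<in> E" using that SE by auto
    then have "z \<in> V" "y \<noteq> z" using edge_in_V[OF sg, of y z] by auto
    moreover have "(v, y) \<in> (adj_rel S)\<^sup>*" using that unfolding W_def component_def by auto
    moreover have "(y, z) \<in> adj_rel S" using that \<open>y \<noteq> z\<close> unfolding adj_rel_def by auto
    ultimately have "(v, z) \<in> (adj_rel S)\<^sup>*" by (meson rtrancl_into_rtrancl)
    then show ?thesis using \<open>z \<in> V\<close> unfolding W_def component_def by simp
  qed
  have cV: "c \<in> V" using cW WV by auto
  have finW: "finite W" by (rule card_ge_0_finite) (simp add: cardW)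
  have sub1: "W - {c} \<subseteq> nbrs S c"
  proof
    fix w assume w: "w \<in> W - {c}"
    then have "{c, w} \<in> {e\<in>S. e \<subseteq> W}" using st by blast
    then show "w \<in> nbrs S c" using w unfolding nbrs_def by auto
  qed
  have sub2: "nbrs S c \<subseteq> nbrs E c" using SE unfolding nbrs_def by auto
  have c3: "card (W - {c}) = 3" using cardW cW finW by (simp add: card_Diff_singleton)
  have "card (nbrs S c) = 3"
  proof -
    have finS: "finite (nbrs S c)" by (rule finite_subset[OF sub2 nbrs_finite(1)[OF cu cV]])
    have "card (W - {c}) \<le> card (nbrs S c)" by (rule card_mono[OF finS sub1])
    moreover have "card (nbrs S c) \<le> card (nbrs E c)" by (rule card_mono[OF nbrs_finite(1)[OF cu cV] sub2])
    ultimately show ?thesis using c3 nbrs_finite[OF cu cV] by simp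
  qed
  then have cC: "c \<in> centers V S" using cV unfolding centers_def by auto
  have noncen: "y \<notin> centers V S" if "y \<in> W" "y \<noteq> c" for y
  proof -
    have "nbrs S y \<subseteq> {c}"
    proof
      fix z assume "z \<in> nbrs S y"
      then have z: "{y, z} \<in> S" "z \<noteq> y" unfolding nbrs_def by auto
      then have "z \<in> W" using clos that by auto
      then have "{y, z} \<in> {e\<in>S. e \<subseteq> W}" using z that by auto
      then have "{y, z} \<in> {{c, w} | w. w \<in> W - {c}}" unfolding st .
      then obtain w where eqw: "{y, z} = {c, w}" by blast
      have "y \<in> {c, w}" "z \<in> {c, w}" using eqw by (metis insertI1, metis insertI1 insertI2 insert_commute)
      then show "z \<in> {c}" using that(2) z(2) by auto
    qed
    then have "card (nbrs S y) \<le> card {c}" by (intro card_mono) auto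
    then have "card (nbrs S y) \<le> 1" by simp
    then show ?thesis unfolding centers_def by auto
  qed
  have uniq: "c' = c" if c'C: "c' \<in> centers V S" and h: "{c', v} \<in> E \<or> c' = v" for c'
  proof (cases "c' = v")
    case True then show ?thesis using noncen vW c'C by auto
  next
    case False
    then have e: "{c', v} \<in> E" using h by auto
    have c'V: "c' \<in> V" using c'C unfolding centers_def by auto
    have "nbrs S c' \<subseteq> nbrs E c'" using SE unfolding nbrs_def by auto
    moreover have "card (nbrs S c') = card (nbrs E c')" using c'C nbrs_finite[OF cu c'V]
      unfolding centers_def by auto
    ultimately have eq: "nbrs S c' = nbrs E c'" using nbrs_finite[OF cu c'V]
      by (simp add: card_subset_eq)
    have "v \<in> nbrs E c'" using e False unfolding nbrs_def by auto
    then have "{c', v} \<in> S" using eq unfolding nbrs_def by auto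
    then have "c' \<in> W" using clos[OF vW] by (simp add: insert_commute)
    then show ?thesis using noncen c'C by auto
  qed
  have "v = c \<or> {c, v} \<in> S"
  proof (cases "v = c")
    case False
    then have "{c, v} \<in> {e\<in>S. e \<subseteq> W}" using st vW by blast
    then show ?thesis by auto
  qed auto
  then show ?thesis using cV cC uniq by blast
qed

lemma rot_facts:
  assumes rs: "rotation_system V E rot" and vV: "v \<in> V" and w: "w \<in> nbrs E v"
  shows "rot v w \<in> nbrs E v" "nbrs E v = {(rot v ^^ k) w | k. True}"
  using assms unfolding rotation_system_def by (auto intro: bij_betw_apply)

lemma rot_inj:
  assumes rs: "rotation_system V E rot" and vV: "v \<in> V"
    and "a \<in> nbrs E v" "a' \<in> nbrs E v" "rot v a = rot v a'"
  shows "a = a'"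
  using assms unfolding rotation_system_def bij_betw_def inj_on_def by blast

lemma rot_nofix:
  assumes rs: "rotation_system V E rot" and cu: "cubic V E" and vV: "v \<in> V"
    and w: "w \<in> nbrs E v" and fx: "rot v w = w"
  shows False
proof -
  have "(rot v ^^ k) w = w" for k by (induction k) (auto simp: fx)
  then have "nbrs E v = {w}" using rot_facts(2)[OF rs vV w] by auto
  then show False using nbrs_finite(2)[OF cu vV] by simp
qed

lemma rot_no2:
  assumes rs: "rotation_system V E rot" and cu: "cubic V E" and vV: "v \<in> V"
    and w: "w \<in> nbrs E v" and f1: "rot v w = w'" and f2: "rot v w' = w"
  shows False
proof -
  have "(rot v ^^ k) w \<in> {w, w'}" for k
  proof (induction k)
    case (Suc k) then show ?case using f1 f2 by (cases "(rot v ^^ k) w = w") auto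
  qed simp
  then have "nbrs E v \<subseteq> {w, w'}" using rot_facts(2)[OF rs vV w] by auto
  then have "card (nbrs E v) \<le> card {w, w'}" by (intro card_mono) auto
  also have "\<dots> \<le> 2" by (simp add: card_insert_if)
  finally show False using nbrs_finite(2)[OF cu vV] by simp
qed

lemma funpow_inj_on:
  assumes "inj_on g D" "g ` D \<subseteq> D"
  shows "a \<in> D \<Longrightarrow> b \<in> D \<Longrightarrow> (g ^^ i) a = (g ^^ i) b \<Longrightarrow> a = b"
proof (induction i arbitrary: a b)
  case (Suc i)
  have "(g ^^ i) a \<in> D" "(g ^^ i) b \<in> D" for i
    using Suc.prems assms(2) by (induction i) auto
  then have "(g ^^ i) a = (g ^^ i) b" using Suc.prems(3) assms(1) by (auto simp: inj_on_def)
  then show ?case using Suc by blast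
qed auto

lemma funpow_in:
  assumes "g ` D \<subseteq> D" "a \<in> D" shows "(g ^^ i) a \<in> D"
  using assms by (induction i) auto

lemma orbit_period:
  assumes inj: "inj_on g D" and cl: "g ` D \<subseteq> D" and dD: "d \<in> D"
    and cd: "card {(g ^^ j) d | j. True} = n" and n0: "n > 0"
  shows "(g ^^ n) d = d"
proof -
  define Orb where "Orb = {(g ^^ j) d | j. True}"
  have fin: "finite Orb" using cd n0 Orb_def by (auto intro: card_ge_0_finite)
  have "(\<lambda>j. (g ^^ j) d) ` {..n} \<subseteq> Orb" unfolding Orb_def by auto
  from card_mono[OF fin this] have "card ((\<lambda>j. (g ^^ j) d) ` {..n}) \<le> n" using cd Orb_def by simp
  then have "\<not> inj_on (\<lambda>j. (g ^^ j) d) {..n}" using card_image by fastforce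
  then obtain i0 j0 where ij0: "i0 \<le> n" "j0 \<le> n" "i0 \<noteq> j0" "(g ^^ i0) d = (g ^^ j0) d"
    unfolding inj_on_def by auto
  obtain i j where ij: "i \<le> n" "j \<le> n" "i < j" "(g ^^ i) d = (g ^^ j) d"
  proof (cases "i0 < j0")
    case True then show ?thesis using that ij0 by blast
  next
    case False then have "j0 < i0" using ij0 by simp
    then show ?thesis using that[of j0 i0] ij0 by simp
  qed
  define q where "q = j - i"
  have "j = i + q" using ij unfolding q_def by simp
  then have "(g ^^ j) d = (g ^^ i) ((g ^^ q) d)" by (simp add: funpow_add)
  then have "(g ^^ i) ((g ^^ q) d) = (g ^^ i) d" using ij by simp
  then have qd: "(g ^^ q) d = d"
    using funpow_inj_on[OF inj cl funpow_in[OF cl dD] dD] by blast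
  have q0: "q > 0" "q \<le> n" using ij unfolding q_def by auto
  have "Orb \<subseteq> (\<lambda>j. (g ^^ j) d) ` {..<q}"
  proof
    fix y assume "y \<in> Orb"
    then obtain m where "y = (g ^^ m) d" unfolding Orb_def by auto
    then have "y = (g ^^ (m mod q)) d" using funpow_mod_eq[where f=g and n=q and x=d and m=m] qd by simp
    then show "y \<in> (\<lambda>j. (g ^^ j) d) ` {..<q}" using q0 by auto
  qed
  from card_mono[OF _ this] have "n \<le> card ((\<lambda>j. (g ^^ j) d) ` {..<q})" using cd Orb_def
    by simp
  also have "\<dots> \<le> q" using card_image_le[of "{..<q}"] by simp
  finally have "q = n" using q0 by simp
  then show ?thesis using qd by simp
qed

lemma dart_facts:
  assumes sg: "simple_graph V E" and d: "(a, b) \<in> darts V E"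
  shows "a \<in> V" "b \<in> V" "a \<in> nbrs E b" "b \<in> nbrs E a" "{a, b} \<in> E" "{b, a} \<in> E" "a \<noteq> b"
proof -
  have h: "a \<in> V" "b \<in> V" "a \<noteq> b" "{a, b} \<in> E" using d unfolding darts_def by auto
  have h2: "{b, a} \<in> E" using h(4) by (simp add: insert_commute)
  show "a \<in> V" "b \<in> V" "{a, b} \<in> E" "{b, a} \<in> E" "a \<noteq> b" using h h2 by auto
  show "a \<in> nbrs E b" "b \<in> nbrs E a" using h h2 unfolding nbrs_def by auto
qed

lemma dart_intro:
  assumes sg: "simple_graph V E" and "b \<in> V" "a \<in> nbrs E b"
  shows "(a, b) \<in> darts V E"
proof -
  have "{b, a} \<in> E" "a \<noteq> b" using assms(3) unfolding nbrs_def by auto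
  then have "a \<in> V" using edge_in_V[OF sg, of b a] by auto
  moreover have "{a, b} \<in> E" using \<open>{b, a} \<in> E\<close> by (simp add: insert_commute)
  ultimately show ?thesis using assms(2) \<open>a \<noteq> b\<close> unfolding darts_def by simp
qed

lemma three_in_two:
  assumes "finite A" "card A = 2" "u \<in> A" "v \<in> A" "w \<in> A" "u \<noteq> v" "u \<noteq> w" "v \<noteq> w"
  shows False
proof -
  have "card {u, v, w} \<le> card A" using assms by (intro card_mono) auto
  then show False using assms by simp
qed

lemma cycle_edges_mem:
  assumes "{u, v} \<in> cycle_edges p"
  shows "u \<in> set p" "v \<in> set p"
proof -
  obtain i where i: "i < length p" "{u, v} = {p ! i, p ! ((i + 1) mod length p)}"
    using assms unfolding cycle_edges_def by auto
  have "length p > 0" using i(1) by linarith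
  then have "(i + 1) mod length p < length p" by simp
  then have "p ! i \<in> set p" "p ! ((i + 1) mod length p) \<in> set p" using i by auto
  moreover have "u \<in> {p ! i, p ! ((i + 1) mod length p)}" "v \<in> {p ! i, p ! ((i + 1) mod length p)}"
    using i(2) by (metis insertI1, metis insertI1 insertI2 insert_commute)
  ultimately show "u \<in> set p" "v \<in> set p" by blast+
qed

lemma cycle_edges_intro:
  assumes "i < length p" "u = p ! i" "v = p ! ((i + 1) mod length p)"
  shows "{u, v} \<in> cycle_edges p" "{v, u} \<in> cycle_edges p"
proof -
  show "{u, v} \<in> cycle_edges p" using assms unfolding cycle_edges_def by blast
  then show "{v, u} \<in> cycle_edges p" by (simp add: insert_commute)
qed

theorem mainTheorem5:
  fixes V :: "'v set" and E S :: "'v set set" and rot :: "'v \<Rightarrow> 'v \<Rightarrow> 'v"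
    and P :: "('v \<times> 'v) set" and x :: 'v
  assumes "fullerene V E rot"
    and "perfect_star_packing V E S"
    and "P \<in> faces V E rot" and "card P = 5"
    and "x \<in> face_verts P" and "x \<in> centers V S"
  shows "\<exists>vs. is_cycle E vs \<and> set vs \<subseteq> V - centers V S \<and>
            \<not> facial_cycle V E rot vs \<and>
            face_verts P - {x} \<subseteq> set vs \<and>
            {e \<in> face_edges P. x \<notin> e} \<subseteq> cycle_edges vs"
proof -
  have ful: "fullerene V E rot" using assms(1) .
  have ps: "perfect_star_packing V E S" using assms(2) .
  have PF: "P \<in> faces V E rot" using assms(3) .
  have P5: "card P = 5" using assms(4) .
  have xP: "x \<in> face_verts P" using assms(5) .
  have xC: "x \<in> centers V S" using assms(6) .
  have pg: "plane_graph V E rot" and cu: "cubic V E"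
    using ful unfolding fullerene_def by blast+
  have sg: "simple_graph V E" and rs: "rotation_system V E rot"
    using pg unfolding plane_graph_def by blast+
  have SE: "S \<subseteq> E" using ps unfolding perfect_star_packing_def by auto
  have finV: "finite V" using sg unfolding simple_graph_def by auto
  define C where "C = centers V S"
  define g where "g = face_step rot"
  have g_simp: "g (u, v) = (v, rot v u)" for u v unfolding g_def face_step_def by simp
  define D where "D = darts V E"
  have gD: "g ` D \<subseteq> D"
  proof
    fix y assume "y \<in> g ` D"
    then obtain u v where uv: "(u, v) \<in> D" "y = g (u, v)" by auto
    have "v \<in> V" "u \<in> nbrs E v" using dart_facts[OF sg] uv unfolding D_def by auto
    then have "rot v u \<in> nbrs E v" using rot_facts(1)[OF rs] by auto
    then have "rot v u \<in> V" "v \<in> nbrs E (rot v u)"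
      using edge_in_V[OF sg, of v "rot v u"] unfolding nbrs_def by (auto simp: insert_commute)
    then have "(v, rot v u) \<in> D" using dart_intro[OF sg] unfolding D_def by auto
    then show "y \<in> D" using uv g_simp by simp
  qed
  have injD: "inj_on g D"
  proof (rule inj_onI)
    fix y z assume yD: "y \<in> D" and zD: "z \<in> D" and gyz: "g y = g z"
    obtain u v where y: "y = (u, v)" by (cases y)
    obtain u' v' where z: "z = (u', v')" by (cases z)
    have vv: "v = v'" and rr: "rot v u = rot v' u'" using gyz g_simp y z by auto
    have "v \<in> V" "u \<in> nbrs E v" "u' \<in> nbrs E v'"
      using dart_facts[OF sg] yD zD y z unfolding D_def by auto
    then have "u = u'" using rot_inj[OF rs, of v u u'] vv rr by simp
    then show "y = z" using y z vv by simp
  qed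
  obtain d where dD: "d \<in> D" and Pd: "P = {(g ^^ j) d | j. True}"
    using PF unfolding faces_def face_orbit_def D_def g_def by auto
  have per: "(g ^^ 5) d = d" using orbit_period[OF injD gD dD] P5 Pd by simp
  obtain k where xk: "x = fst ((g ^^ k) d)"
    using xP Pd unfolding face_verts_def by auto
  define d0 where "d0 = (g ^^ k) d"
  have d0D: "d0 \<in> D" using funpow_in[OF gD dD] unfolding d0_def .
  have per0: "(g ^^ 5) d0 = d0"
  proof -
    have "(g ^^ 5) d0 = (g ^^ (5 + k)) d" unfolding d0_def by (simp add: funpow_add)
    also have "\<dots> = (g ^^ k) ((g ^^ 5) d)" by (simp add: funpow_add add.commute)
    finally show ?thesis using per d0_def by simp
  qed
  have P_eq: "P = (\<lambda>j. (g ^^ j) d0) ` {..<5}"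
  proof
    show "P \<subseteq> (\<lambda>j. (g ^^ j) d0) ` {..<5}"
    proof
      fix y assume "y \<in> P"
      then obtain m where m: "y = (g ^^ m) d" using Pd by auto
      have "(g ^^ m) d = (g ^^ (m mod 5)) d" by (rule funpow_mod_eq[OF per, symmetric])
      also have "\<dots> = (g ^^ ((m + 4 * k + k) mod 5)) d" by (simp add: mod_add_eq[symmetric])
      also have "\<dots> = (g ^^ (m + 4 * k + k)) d" by (rule funpow_mod_eq[OF per])
      also have "\<dots> = (g ^^ (m + 4 * k)) d0" unfolding d0_def by (simp only: funpow_add comp_apply)
      also have "\<dots> = (g ^^ ((m + 4 * k) mod 5)) d0" by (rule funpow_mod_eq[OF per0, symmetric])
      finally show "y \<in> (\<lambda>j. (g ^^ j) d0) ` {..<5}" using m by auto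
    qed
    show "(\<lambda>j. (g ^^ j) d0) ` {..<5} \<subseteq> P"
    proof
      fix y assume "y \<in> (\<lambda>j. (g ^^ j) d0) ` {..<5}"
      then obtain j where "y = (g ^^ j) d0" by auto
      then have "y = (g ^^ (j + k)) d" unfolding d0_def by (simp add: funpow_add)
      then show "y \<in> P" using Pd by auto
    qed
  qed
  obtain a where d0a: "d0 = (x, a)" using xk unfolding d0_def by (metis prod.collapse)
  define b where "b = rot a x"
  define c where "c = rot b a"
  define e where "e = rot c b"
  have g1: "(g ^^ 1) d0 = (a, b)" using d0a g_simp b_def by simp
  have g2: "(g ^^ 2) d0 = (b, c)" using g1 g_simp c_def by (simp add: numeral_eq_Suc)
  have g3: "(g ^^ 3) d0 = (c, e)" using g2 g_simp e_def by (simp add: numeral_eq_Suc)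
  have g4: "(g ^^ 4) d0 = (e, rot e c)" using g3 g_simp by (simp add: numeral_eq_Suc)
  have g5: "(g ^^ 5) d0 = (rot e c, rot (rot e c) e)" using g4 g_simp by (simp add: numeral_eq_Suc)
  have rec: "rot e c = x" and rxe: "rot x e = a" using g5 per0 d0a by auto
  have P_expl: "P = {(x, a), (a, b), (b, c), (c, e), (e, x)}"
  proof -
    have "{..<5::nat} = {0, 1, 2, 3, 4}" by auto
    then show ?thesis using P_eq g1 g2 g3 g4 d0a rec by auto
  qed
  have PD: "P \<subseteq> D" using Pd funpow_in[OF gD dD] by auto
  have dxa: "(x, a) \<in> D" and dab: "(a, b) \<in> D" and dbc: "(b, c) \<in> D"
    and dce: "(c, e) \<in> D" and dex: "(e, x) \<in> D" using PD P_expl by auto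
  note dfx = dart_facts[OF sg, unfolded D_def[symmetric]]
  have xV: "x \<in> V" and aV: "a \<in> V" and bV: "b \<in> V" and cV: "c \<in> V" and eV: "e \<in> V"
    using dfx dxa dbc dce by auto
  have xa: "x \<noteq> a" and ab: "a \<noteq> b" and bc: "b \<noteq> c" and ce: "c \<noteq> e" and ex: "e \<noteq> x"
    using dfx dxa dab dbc dce dex by auto
  have bx: "b \<noteq> x"
    using rot_nofix[OF rs cu aV, of x] dfx(3)[OF dxa] b_def by auto
  have cx: "c \<noteq> x"
    using rot_nofix[OF rs cu eV, of c] dfx(3)[OF dce] rec by auto
  have eb: "e \<noteq> b"
    using rot_nofix[OF rs cu cV, of b] dfx(3)[OF dbc] e_def by auto
  have ca: "c \<noteq> a"
    using rot_nofix[OF rs cu bV, of a] dfx(3)[OF dab] c_def by auto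
  have ea: "e \<noteq> a"
    using rot_nofix[OF rs cu xV, of e] dfx(3)[OF dex] rxe by auto
  have xa_n: "a \<in> nbrs E x" and ax_n: "x \<in> nbrs E a" and ab_n: "a \<in> nbrs E b"
    and ba_n: "b \<in> nbrs E a" and bc_n: "c \<in> nbrs E b" and cb_n: "b \<in> nbrs E c"
    and ce_n: "e \<in> nbrs E c" and ec_n: "c \<in> nbrs E e" and ex_n: "x \<in> nbrs E e"
    and xe_n: "e \<in> nbrs E x"
    using dfx(3,4) dxa dab dbc dce dex by auto
  have nbE: "{v, u} \<in> E" if "u \<in> nbrs E v" for u v using that unfolding nbrs_def by auto
  have nbV: "u \<in> V" if "u \<in> nbrs E v" for u v
    using nbE[OF that] edge_in_V[OF sg] by blast
  have nbne: "u \<noteq> v" if "u \<in> nbrs E v" for u v using that unfolding nbrs_def by auto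
  have nbsym: "v \<in> nbrs E u" if "u \<in> nbrs E v" for u v
    using that unfolding nbrs_def by (auto simp: insert_commute)
  have uniqC: "u = w" if h: "v \<in> V" "u \<in> C" "w \<in> C" "u \<in> nbrs E v \<or> u = v" "w \<in> nbrs E v"
    for u v w
  proof -
    obtain c0 where c0: "\<forall>c'\<in>centers V S. {c', v} \<in> E \<or> c' = v \<longrightarrow> c' = c0"
      using star_center[OF sg cu ps h(1)] by blast
    have "{u, v} \<in> E \<or> u = v" using h(4) nbE[of u v] by (metis insert_commute)
    then have "u = c0" using c0 h(2) unfolding C_def by blast
    moreover have "{w, v} \<in> E" using nbE[OF h(5)] by (metis insert_commute)
    then have "w = c0" using c0 h(3) unfolding C_def by blast
    ultimately show ?thesis by simp
  qed
  have adjC: False if "u \<in> C" "v \<in> C" "u \<in> nbrs E v" for u v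
  proof -
    have "v \<in> V" using that(2) unfolding C_def centers_def by auto
    then have "v = u" using uniqC[of v v u] that by auto
    then show False using nbne[OF that(3)] by simp
  qed
  have xC': "x \<in> C" using xC C_def by simp
  have aN: "a \<notin> C" using adjC[OF _ xC' xa_n] by auto
  have eN: "e \<notin> C" using adjC[OF _ xC' xe_n] by auto
  have bN: "b \<notin> C"
  proof
    assume "b \<in> C"
    then have "b = x" using uniqC[OF aV _ xC', of b] ba_n xa_n nbsym by auto
    then show False using bx by simp
  qed
  have cN: "c \<notin> C"
  proof
    assume "c \<in> C"
    then have "c = x" using uniqC[OF eV _ xC', of c] ce_n nbsym ex_n by auto
    then show False using cx by simp
  qed
  define N where "N v = nbrs E v - C" for v
  have N2: "card (N v) = 2" "finite (N v)" if vh: "v \<in> V - C" for v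
  proof -
    obtain c0 where c0V: "c0 \<in> V" and c0C: "c0 \<in> centers V S" and c0S: "v = c0 \<or> {c0, v} \<in> S"
      using star_center[OF sg cu ps, of v] vh by auto
    have "v \<noteq> c0" using vh c0C C_def by auto
    then have "{c0, v} \<in> E" using c0S SE by auto
    then have c0n: "c0 \<in> nbrs E v" using \<open>v \<noteq> c0\<close> unfolding nbrs_def by (auto simp: insert_commute)
    have "nbrs E v \<inter> C = {c0}"
    proof
      show "{c0} \<subseteq> nbrs E v \<inter> C" using c0n c0C C_def by auto
      show "nbrs E v \<inter> C \<subseteq> {c0}"
      proof
        fix w assume w: "w \<in> nbrs E v \<inter> C"
        then show "w \<in> {c0}" using uniqC[of v w c0] vh c0n c0C C_def by auto
      qed
    qed
    moreover have "finite (nbrs E v)" "card (nbrs E v) = 3" using nbrs_finite[OF cu] vh by auto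
    moreover have "N v = nbrs E v - {c0}" unfolding N_def using calculation(1) by blast
    ultimately show "card (N v) = 2" using c0n by (simp add: card_Diff_singleton)
    show "finite (N v)" unfolding N_def using \<open>finite (nbrs E v)\<close> by simp
  qed
  define Paths where "Paths = {p. distinct p \<and> set p \<subseteq> V - C \<and>
      (\<forall>i. Suc i < length p \<longrightarrow> {p ! i, p ! Suc i} \<in> E) \<and> (\<exists>q. p = [e, c, b, a] @ q)}"
  have base: "[e, c, b, a] \<in> Paths"
  proof -
    have "{e, c} \<in> E" "{c, b} \<in> E" "{b, a} \<in> E" using nbE ec_n cb_n ab_n by auto
    then have "\<forall>i. Suc i < length [e, c, b, a] \<longrightarrow> {[e, c, b, a] ! i, [e, c, b, a] ! Suc i} \<in> E"
      by (auto simp: less_Suc_eq)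
    moreover have "distinct [e, c, b, a]" using ce eb ea bc ca ab by auto
    moreover have "set [e, c, b, a] \<subseteq> V - C" using eV cV bV aV eN cN bN aN by auto
    ultimately show ?thesis unfolding Paths_def by auto
  qed
  have bnd: "length p \<le> card V" if "p \<in> Paths" for p
  proof -
    have "distinct p" "set p \<subseteq> V" using that unfolding Paths_def by auto
    then show ?thesis using card_mono[OF finV] distinct_card by metis
  qed
  obtain L where "\<exists>p\<in>Paths. length p = L" and Lmax: "\<forall>y. (\<exists>p\<in>Paths. length p = y) \<longrightarrow> y \<le> L"
    using Nat.ex_has_greatest_nat[of "\<lambda>n. \<exists>p\<in>Paths. length p = n" 4 "card V"] base bnd by force
  then obtain p where pP: "p \<in> Paths" and pL: "length p = L" by blast
  have pd: "distinct p" and pV: "set p \<subseteq> V - C"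
    and pE: "\<And>i. Suc i < length p \<Longrightarrow> {p ! i, p ! Suc i} \<in> E"
    using pP unfolding Paths_def by auto
  obtain q where pq: "p = [e, c, b, a] @ q" using pP unfolding Paths_def by auto
  have L4: "length p \<ge> 4" using pq by simp
  have p0: "p ! 0 = e" and p1: "p ! 1 = c" and p2: "p ! 2 = b" and p3: "p ! 3 = a"
    using pq by auto
  define w where "w = p ! (L - 1)"
  define q' where "q' = p ! (L - 2)"
  have "p ! (L - 1) \<in> set p" "p ! (L - 2) \<in> set p" using L4 pL by (intro nth_mem; simp)+
  then have wV: "w \<in> V - C" and q'V: "q' \<in> V - C" using pV w_def q'_def by auto
  have s2: "Suc (L - 2) = L - 1" "Suc (L - 2) < length p" using L4 pL by auto
  have "{q', w} \<in> E" using pE[OF s2(2)] unfolding s2(1) q'_def w_def .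
  moreover have "q' \<noteq> w" using pd L4 pL q'_def w_def by (simp add: nth_eq_iff_index_eq)
  ultimately have q'n: "q' \<in> N w" using q'V unfolding N_def nbrs_def by (auto simp: insert_commute)
  obtain z where zN: "z \<in> N w" and zq: "z \<noteq> q'"
  proof -
    have "\<not> N w \<subseteq> {q'}"
    proof
      assume "N w \<subseteq> {q'}"
      then have "card (N w) \<le> card {q'}" by (intro card_mono) auto
      then show False using N2[OF wV] by simp
    qed
    then show ?thesis using that by auto
  qed
  have zn: "z \<in> nbrs E w" and zC: "z \<notin> C" using zN unfolding N_def by auto
  have zV: "z \<in> V" using nbV[OF zn] .
  have wz: "{w, z} \<in> E" using nbE[OF zn] .
  have zp: "z \<in> set p"
  proof (rule ccontr)
    assume zp: "z \<notin> set p"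
    have "p @ [z] \<in> Paths"
    proof -
      have "distinct (p @ [z])" using pd zp by simp
      moreover have "set (p @ [z]) \<subseteq> V - C" using pV zV zC by auto
      moreover have "\<forall>i. Suc i < length (p @ [z]) \<longrightarrow> {(p @ [z]) ! i, (p @ [z]) ! Suc i} \<in> E"
      proof (intro allI impI)
        fix i assume i: "Suc i < length (p @ [z])"
        show "{(p @ [z]) ! i, (p @ [z]) ! Suc i} \<in> E"
        proof (cases "Suc i < length p")
          case True then show ?thesis using pE[OF True] by (simp add: nth_append)
        next
          case False
          then have "i = L - 1" "Suc i = L" using i pL by auto
          then show ?thesis using wz w_def pL by (simp add: nth_append)
        qed
      qed
      moreover have "\<exists>q. p @ [z] = [e, c, b, a] @ q" using pq by auto
      ultimately show ?thesis unfolding Paths_def by blast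
    qed
    then have "Suc L \<le> L" using Lmax pL by (metis length_append_singleton)
    then show False by simp
  qed
  then obtain j where j: "j < L" "z = p ! j" using pL by (auto simp: in_set_conv_nth)
  have "j \<noteq> L - 1" using j nbne[OF zn] w_def by auto
  moreover have "j \<noteq> L - 2" using j zq q'_def by auto
  ultimately have jL: "j + 1 < L - 1" using j by auto
  have j0: "j = 0"
  proof (rule ccontr)
    assume "j \<noteq> 0"
    have e1: "{p ! (j - 1), z} \<in> E" using pE[of "j - 1"] j \<open>j \<noteq> 0\<close> pL by simp
    have e2: "{z, p ! (j + 1)} \<in> E" using pE[of j] j jL pL by simp
    have e3: "{z, w} \<in> E" using wz by (simp add: insert_commute)
    have zVC: "z \<in> V - C" using zV zC by simp
    have ne1: "p ! (j - 1) \<noteq> z" using pd j pL \<open>j \<noteq> 0\<close> by (simp add: nth_eq_iff_index_eq)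
    have ne2: "p ! (j + 1) \<noteq> z" using pd j jL pL by (simp add: nth_eq_iff_index_eq)
    have ne3: "w \<noteq> z" using nbne[OF zn] by simp
    have inp: "p ! (j - 1) \<in> set p" "p ! (j + 1) \<in> set p" using j jL pL by (intro nth_mem; simp)+
    then have nC: "p ! (j - 1) \<notin> C" "p ! (j + 1) \<notin> C" using pV by auto
    have m1: "p ! (j - 1) \<in> N z" using e1 ne1 nC unfolding N_def nbrs_def
      by (auto simp: insert_commute)
    have m2: "p ! (j + 1) \<in> N z" using e2 ne2 nC unfolding N_def nbrs_def by auto
    have m3: "w \<in> N z" using e3 ne3 wV unfolding N_def nbrs_def by auto
    have d12: "p ! (j - 1) \<noteq> p ! (j + 1)" using pd j jL pL by (simp add: nth_eq_iff_index_eq)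
    have d13: "p ! (j - 1) \<noteq> w" using pd j jL pL w_def by (simp add: nth_eq_iff_index_eq)
    have d23: "p ! (j + 1) \<noteq> w" using pd j jL pL w_def by (simp add: nth_eq_iff_index_eq)
    show False using three_in_two[OF N2(2)[OF zVC] N2(1)[OF zVC] m1 m2 m3 d12 d13 d23] .
  qed
  have we: "{w, e} \<in> E" using wz j j0 p0 by simp
  have cyc: "is_cycle E p"
    unfolding is_cycle_def
  proof (intro conjI allI impI)
    show "3 \<le> length p" using L4 by simp
    show "distinct p" using pd .
    fix i assume i: "i < length p"
    show "{p ! i, p ! ((i + 1) mod length p)} \<in> E"
    proof (cases "Suc i < length p")
      case True then show ?thesis using pE[OF True] by simp
    next
      case False
      then have "i = L - 1" "i + 1 = length p" using i pL by auto
      then show ?thesis using we w_def p0 pL by simp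
    qed
  qed
  have pne: "0 < length p" "1 < length p" "2 < length p" using L4 by auto
  have i1: "c = p ! ((0 + 1) mod length p)" using L4 p1 by simp
  have i2: "b = p ! ((1 + 1) mod length p)" using L4 p2 by (simp add: numeral_2_eq_2)
  have i3: "a = p ! ((2 + 1) mod length p)" using L4 p3 by (simp add: numeral_3_eq_3)
  note ce0 = cycle_edges_intro[OF pne(1) p0[symmetric] i1]
  note ce1 = cycle_edges_intro[OF pne(2) p1[symmetric] i2]
  note ce2 = cycle_edges_intro[OF pne(3) p2[symmetric] i3]
  have xnp: "x \<notin> set p" using pV xC' by auto
  have nonfacial: "\<not> facial_cycle V E rot p"
  proof
    assume "facial_cycle V E rot p"
    then obtain F where FF: "F \<in> faces V E rot" and cF: "cycle_edges p = face_edges F"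
      unfolding facial_cycle_def by auto
    obtain d' where Fd: "F = {(g ^^ j) d' | j. True}"
      using FF unfolding faces_def face_orbit_def g_def by auto
    have Fcl: "g y \<in> F" if yF: "y \<in> F" for y
    proof -
      obtain j where "y = (g ^^ j) d'" using yF Fd by auto
      then have "g y = (g ^^ Suc j) d'" by simp
      then show ?thesis using Fd by blast
    qed
    have edgeF: "{u, v} \<in> cycle_edges p" if "(u, v) \<in> F" for u v
    proof -
      have "(\<lambda>(a, b). {a, b}) (u, v) \<in> face_edges F" using that unfolding face_edges_def by (rule imageI)
      then show ?thesis using cF by simp
    qed
    have "{b, c} \<in> face_edges F" using ce1 cF by simp
    then obtain u v where uvF: "(u, v) \<in> F" and uv: "{b, c} = {u, v}"
      unfolding face_edges_def by auto
    then have "(u, v) = (b, c) \<or> (u, v) = (c, b)" by (simp add: doubleton_eq_iff) blast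
    then show False
    proof
      assume "(u, v) = (b, c)"
      then have "(b, c) \<in> F" using uvF by simp
      then have "g (b, c) \<in> F" by (rule Fcl)
      then have "(c, e) \<in> F" using g_simp e_def by simp
      then have "g (c, e) \<in> F" by (rule Fcl)
      then have "(e, x) \<in> F" using g_simp rec by simp
      then have "{e, x} \<in> cycle_edges p" by (rule edgeF)
      then have "x \<in> set p" by (rule cycle_edges_mem(2))
      then show False using xnp by simp
    next
      assume "(u, v) = (c, b)"
      then have "(c, b) \<in> F" using uvF by simp
      then have "g (c, b) \<in> F" by (rule Fcl)
      then have "(b, rot b c) \<in> F" using g_simp by simp
      then have "{b, rot b c} \<in> cycle_edges p" by (rule edgeF)
      then have rp: "rot b c \<in> set p" by (rule cycle_edges_mem(2))
      have rn: "rot b c \<in> nbrs E b" using rot_facts(1)[OF rs bV bc_n] .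
      have r1: "rot b c \<noteq> c" using rot_nofix[OF rs cu bV bc_n] by auto
      have r2: "rot b c \<noteq> a" using rot_no2[OF rs cu bV ab_n, of c] c_def by auto
      have bVC: "b \<in> V - C" using bV bN by simp
      have m1: "a \<in> N b" using ab_n aN unfolding N_def by simp
      have m2: "c \<in> N b" using bc_n cN unfolding N_def by simp
      have m3: "rot b c \<in> N b" using rn rp pV unfolding N_def by auto
      show False using three_in_two[OF N2(2)[OF bVC] N2(1)[OF bVC] m1 m2 m3 ca[symmetric] r2[symmetric] r1[symmetric]] .
    qed
  qed
  have fv: "face_verts P - {x} \<subseteq> set p"
  proof -
    have "face_verts P = {x, a, b, c, e}" unfolding face_verts_def P_expl by simp
    moreover have "3 < length p" using L4 by simp
    then have "p ! 0 \<in> set p" "p ! 1 \<in> set p" "p ! 2 \<in> set p" "p ! 3 \<in> set p"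
      using pne by (simp_all only: nth_mem)
    then have "a \<in> set p" "b \<in> set p" "c \<in> set p" "e \<in> set p"
      using p0 p1 p2 p3 by simp_all
    ultimately show ?thesis by auto
  qed
  have fe: "{ed \<in> face_edges P. x \<notin> ed} \<subseteq> cycle_edges p"
  proof
    fix ed assume ed: "ed \<in> {ed \<in> face_edges P. x \<notin> ed}"
    then have "ed \<in> face_edges P" "x \<notin> ed" by auto
    moreover have "face_edges P = {{x, a}, {a, b}, {b, c}, {c, e}, {e, x}}"
      unfolding face_edges_def P_expl by simp
    ultimately have "ed = {a, b} \<or> ed = {b, c} \<or> ed = {c, e}" by blast
    then show "ed \<in> cycle_edges p" using ce0(2) ce1(2) ce2(2) by blast
  qed
  have pV': "set p \<subseteq> V - centers V S" using pV unfolding C_def .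
  have fin: "is_cycle E p \<and> set p \<subseteq> V - centers V S \<and> \<not> facial_cycle V E rot p \<and>
     face_verts P - {x} \<subseteq> set p \<and> {y \<in> face_edges P. x \<notin> y} \<subseteq> cycle_edges p"
    using cyc pV' nonfacial fv fe by (intro conjI)
  then show ?thesis by (rule exI)
qed

end
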